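(* For all integers $n\geq 2$ and $k\geq 0$, $$2nJ_{2n,k}=[k(k+1)+2n-2]J_{2n-2,k}+2[(k-1)(2n-k-1)+1]J_{2n-2,k-1}+[(2n-k)(2n-k+1)+2n-2]J_{2n-2,k-2},$$ where $J_{m,j}=0$ for $j<0$.
   Context: For a permutation $\pi=a_1a_2\cdots a_m$ of $[m]=\{1,\ldots,m\}$, a descent is an index $1\leq i\leq m-1$ with $a_i>a_{i+1}$, and ${\rm d}(\pi)$ is the number of descents. A fixed-point free involution of $[m]$ is a permutation $\pi$ with $\pi^2=\mathrm{id}$ and $\pi(i)\neq i$ for all $i$. $J_{m,j}$ denotes the number of fixed-point free involutions of $[m]$ with exactly $j$ descents (so $J_{m,j}=0$ for $j<0$ or $j>m-1$). *)

theory Defs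
  imports "HOL-Combinatorics.Combinatorics"
begin

definition descents :: "nat \<Rightarrow> (nat \<Rightarrow> nat) \<Rightarrow> nat set" where
  "descents m \<pi> = {i. 1 \<le> i \<and> i \<le> m - 1 \<and> \<pi> i > \<pi> (Suc i)}"

definition des :: "nat \<Rightarrow> (nat \<Rightarrow> nat) \<Rightarrow> nat" where
  "des m \<pi> = card (descents m \<pi>)"

definition fpf_involutions :: "nat \<Rightarrow> (nat \<Rightarrow> nat) set" where
  "fpf_involutions m = {\<pi>. \<pi> permutes {1..m} \<and> \<pi> \<circ> \<pi> = id \<and> (\<forall>i\<in>{1..m}. \<pi> i \<noteq> i)}"

definition J :: "nat \<Rightarrow> int \<Rightarrow> int" where
  "J m j = (if j < 0 then 0
            else int (card {\<pi> \<in> fpf_involutions m. int (des m \<pi>) = j}))"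

end

theory Submission
  imports Defs
begin


definition lv :: "nat \<Rightarrow> nat \<Rightarrow> nat" where
  "lv t v = (if v \<le> t then v else Suc v)"
definition up :: "nat \<Rightarrow> nat \<Rightarrow> nat" where
  "up s x = (if x \<le> s then x else x - 1)"
definition ins1 :: "(nat \<Rightarrow> nat) \<Rightarrow> nat \<Rightarrow> nat \<Rightarrow> nat \<Rightarrow> nat" where
  "ins1 w s t x = (if x = Suc s then Suc t else lv t (w (up s x)))"
definition ins2 :: "(nat \<Rightarrow> nat) \<Rightarrow> nat \<Rightarrow> nat \<Rightarrow> nat \<Rightarrow> nat" where
  "ins2 w s1 s2 = ins1 (ins1 w s2 s1) s1 (Suc s2)"
definition MM :: "(nat \<Rightarrow> nat) \<Rightarrow> nat \<Rightarrow> nat \<Rightarrow> int" where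
  "MM w s t = of_bool (t < w s) - of_bool (t < w (Suc s)) + of_bool (w s < w (Suc s))"
definition dd :: "nat \<Rightarrow> (nat \<Rightarrow> nat) \<Rightarrow> int" where
  "dd L w = (\<Sum>i<Suc L. of_bool (w (Suc i) < w i))"

lemma perm_out: "w permutes {1..L} \<Longrightarrow> x \<notin> {1..L} \<Longrightarrow> w x = x"
  by (simp add: permutes_def)

lemma perm_in: "w permutes {1..L} \<Longrightarrow> x \<in> {1..L} \<Longrightarrow> w x \<in> {1..L}"
  using permutes_in_image[of w "{1..L}" x] by blast

lemma perm_le: "w permutes {1..L} \<Longrightarrow> x \<le> Suc L \<Longrightarrow> w x \<le> Suc L"
proof -
  assume a: "w permutes {1..L}" "x \<le> Suc L"
  show ?thesis
  proof (cases "x \<in> {1..L}")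
    case True then show ?thesis using perm_in[OF a(1) True] by auto
  next
    case False then show ?thesis using perm_out[OF a(1) False] a(2) by auto
  qed
qed

lemma card_of_bool: "finite A \<Longrightarrow> int (card {x\<in>A. P x}) = (\<Sum>x\<in>A. (of_bool (P x) :: int))"
proof -
  assume f: "finite A"
  have "int (card {x\<in>A. P x}) = (\<Sum>x\<in>{x\<in>A. P x}. (1::int))" by simp
  also have "\<dots> = (\<Sum>x\<in>A. if P x then 1 else 0)" using f by (rule sum.inter_filter)
  finally show ?thesis by (simp add: of_bool_def)
qed

lemma des_dd: assumes "w permutes {1..L}" shows "int (des L w) = dd L w"
proof -
  have w0: "w 0 = 0" using perm_out[OF assms, of 0] by auto
  have wL: "w (Suc L) = Suc L" using perm_out[OF assms, of "Suc L"] by auto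
  have "int (des L w) = (\<Sum>i\<in>{1..L-1}. of_bool (w (Suc i) < w i))"
  proof -
    have "descents L w = {i\<in>{1..L-1}. w (Suc i) < w i}"
      unfolding descents_def by auto
    moreover have "int (card {i\<in>{1..L-1}. w (Suc i) < w i}) = (\<Sum>i\<in>{1..L-1}. of_bool (w (Suc i) < w i))"
      by (rule card_of_bool) simp
    ultimately show ?thesis unfolding des_def by simp
  qed
  also have "\<dots> = dd L w"
  proof (cases L)
    case 0 then show ?thesis by (simp add: dd_def w0)
  next
    case (Suc L')
    have "w L \<le> L" using perm_in[OF assms, of L] Suc by auto
    then have e: "of_bool (w (Suc L) < w L) = (0::int)" using wL by simp
    have "dd L w = (\<Sum>i<Suc L'. of_bool (w (Suc i) < w i)) + of_bool (w (Suc L) < w L)"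
      unfolding dd_def using Suc by simp
    also have "(\<Sum>i<Suc L'. of_bool (w (Suc i) < w i)) = of_bool (w 1 < w 0) + (\<Sum>i\<in>{1..L'}. of_bool (w (Suc i) < w i))"
      by (simp add: lessThan_Suc_atMost atMost_atLeast0 sum.atLeast_Suc_atMost)
    finally show ?thesis using e w0 Suc by simp
  qed
  finally show ?thesis .
qed

lemma lv_less: "(lv t a < lv t b) = (a < b)" by (auto simp: lv_def)
lemma lv_inj: "(lv t a = lv t b) = (a = b)" by (auto simp: lv_def)
lemma lv_ne: "lv t a \<noteq> Suc t" by (auto simp: lv_def)

lemma ins1_perm:
  assumes w: "w permutes {1..L}" and s: "s \<le> L" and t: "t \<le> L"
  shows "ins1 w s t permutes {1..Suc L}"
  unfolding permutes_def
proof (intro conjI allI impI)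
  fix x assume x: "x \<notin> {1..Suc L}"
  show "ins1 w s t x = x"
  proof (cases "x = 0")
    case True then show ?thesis using perm_out[OF w, of 0] by (simp add: ins1_def up_def lv_def)
  next
    case False
    then have "x > Suc L" using x by auto
    then have "w (x - 1) = x - 1" by (intro perm_out[OF w]) auto
    then show ?thesis using \<open>x > Suc L\<close> s t by (simp add: ins1_def up_def lv_def)
  qed
next
  fix y
  have inj: "x1 = x2" if "ins1 w s t x1 = ins1 w s t x2" for x1 x2
  proof -
    have iw: "inj w" using permutes_inj[OF w] .
    show ?thesis
    proof (cases "x1 = Suc s \<or> x2 = Suc s")
      case True then show ?thesis using that by (auto simp: ins1_def lv_def split: if_splits)
    next
      case False
      then have "w (up s x1) = w (up s x2)" using that by (simp add: ins1_def lv_inj)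
      then have "up s x1 = up s x2" using iw by (simp add: inj_eq)
      then show ?thesis using False by (auto simp: up_def split: if_splits)
    qed
  qed
  have ex: "\<exists>x. ins1 w s t x = y"
  proof (cases "y = Suc t")
    case True then show ?thesis by (auto simp: ins1_def)
  next
    case False
    define v where "v = (if y \<le> t then y else y - 1)"
    obtain v' where v': "w v' = v" using w unfolding permutes_def by metis
    define x where "x = (if v' \<le> s then v' else Suc v')"
    have "ins1 w s t x = y" using False v' by (auto simp: ins1_def x_def up_def lv_def v_def)
    then show ?thesis by blast
  qed
  show "\<exists>!x. ins1 w s t x = y" using ex inj by blast
qed

lemma split_sum1:
  fixes f :: "nat \<Rightarrow> int"
  assumes "s \<le> L"
  shows "(\<Sum>i<Suc L. f i) = (\<Sum>i<s. f i) + f s + (\<Sum>i\<in>{Suc s..<Suc L}. f i)"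
proof -
  have "{..<Suc L} = {..<s} \<union> {s..<Suc L}" using assms by auto
  then have "(\<Sum>i<Suc L. f i) = (\<Sum>i<s. f i) + (\<Sum>i\<in>{s..<Suc L}. f i)"
    by (simp add: sum.union_disjoint ivl_disj_int)
  also have "(\<Sum>i\<in>{s..<Suc L}. f i) = f s + (\<Sum>i\<in>{Suc s..<Suc L}. f i)"
    by (rule sum.atLeast_Suc_lessThan) (use assms in simp)
  finally show ?thesis by simp
qed

lemma dd_ins1:
  assumes w: "w permutes {1..L}" and s: "s \<le> L" and t: "t \<le> L"
  shows "dd (Suc L) (ins1 w s t) = dd L w + MM w s t"
proof -
  let ?f = "ins1 w s t"
  let ?g = "\<lambda>i. (of_bool (w (Suc i) < w i) :: int)"
  let ?h = "\<lambda>i. (of_bool (?f (Suc i) < ?f i) :: int)"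
  have ne: "w s \<noteq> w (Suc s)" using permutes_inj[OF w] by (metis inj_eq n_not_Suc_n)
  have A: "dd L w = sum ?g {..<s} + ?g s + sum ?g {Suc s..<Suc L}"
    unfolding dd_def by (rule split_sum1[OF s])
  have B0: "dd (Suc L) ?f = sum ?h {..<s} + ?h s + sum ?h {Suc s..<Suc (Suc L)}"
    unfolding dd_def by (rule split_sum1) (use s in simp)
  have B1: "sum ?h {Suc s..<Suc (Suc L)} = ?h (Suc s) + sum ?h {Suc (Suc s)..<Suc (Suc L)}"
    by (rule sum.atLeast_Suc_lessThan) (use s in simp)
  have C1: "sum ?h {..<s} = sum ?g {..<s}"
    by (rule sum.cong) (auto simp: ins1_def up_def lv_less)
  have C2: "sum ?h {Suc (Suc s)..<Suc (Suc L)} = sum ?g {Suc s..<Suc L}"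
  proof -
    have "sum ?h {Suc (Suc s)..<Suc (Suc L)} = sum (\<lambda>i. ?h (Suc i)) {Suc s..<Suc L}"
      by (rule sum.shift_bounds_Suc_ivl)
    also have "\<dots> = sum ?g {Suc s..<Suc L}"
      by (rule sum.cong) (auto simp: ins1_def up_def lv_less)
    finally show ?thesis .
  qed
  have C3: "?h s = of_bool (t < w s)"
    by (auto simp: ins1_def up_def lv_def)
  have C4: "?h (Suc s) = of_bool (w (Suc s) \<le> t)"
    by (auto simp: ins1_def up_def lv_def)
  have "dd (Suc L) ?f = sum ?g {..<s} + of_bool (t < w s) + of_bool (w (Suc s) \<le> t) + sum ?g {Suc s..<Suc L}"
    using B0 B1 C1 C2 C3 C4 by simp
  then show ?thesis using A ne unfolding MM_def by (auto simp: not_less)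
qed

definition PP :: "nat \<Rightarrow> nat \<Rightarrow> nat \<Rightarrow> nat" where
  "PP s1 s2 v = lv (Suc s2) (lv s1 v)"
definition QQ :: "nat \<Rightarrow> nat \<Rightarrow> nat \<Rightarrow> nat" where
  "QQ s1 s2 x = up s2 (up s1 x)"

lemma ins2_eq:
  assumes "s1 \<le> s2"
  shows "ins2 w s1 s2 x = (if x = Suc s1 then Suc (Suc s2) else if x = Suc (Suc s2) then Suc s1
     else PP s1 s2 (w (QQ s1 s2 x)))"
  using assms by (auto simp: ins2_def ins1_def up_def lv_def PP_def QQ_def)

lemma QP: "s1 \<le> s2 \<Longrightarrow> QQ s1 s2 (PP s1 s2 v) = v"
  by (auto simp: up_def lv_def PP_def QQ_def)
lemma PQ: "s1 \<le> s2 \<Longrightarrow> x \<noteq> Suc s1 \<Longrightarrow> x \<noteq> Suc (Suc s2) \<Longrightarrow> PP s1 s2 (QQ s1 s2 x) = x"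
  by (auto simp: up_def lv_def PP_def QQ_def)
lemma P_ne1: "s1 \<le> s2 \<Longrightarrow> PP s1 s2 v \<noteq> Suc s1"
  by (auto simp: lv_def PP_def)
lemma P_ne2: "s1 \<le> s2 \<Longrightarrow> PP s1 s2 v \<noteq> Suc (Suc s2)"
  by (auto simp: lv_def PP_def)
lemma P_in: "s1 \<le> s2 \<Longrightarrow> s2 \<le> N \<Longrightarrow> v \<in> {1..N} \<Longrightarrow> PP s1 s2 v \<in> {1..Suc (Suc N)}"
  by (auto simp: lv_def PP_def)
lemma P_out: "s1 \<le> s2 \<Longrightarrow> s2 \<le> N \<Longrightarrow> v \<notin> {1..N} \<Longrightarrow> PP s1 s2 v \<notin> {1..Suc (Suc N)}"
  by (auto simp: lv_def PP_def)
lemma Q_in: "s1 \<le> s2 \<Longrightarrow> s2 \<le> N \<Longrightarrow> x \<in> {1..Suc (Suc N)} \<Longrightarrow> x \<noteq> Suc s1 \<Longrightarrow> x \<noteq> Suc (Suc s2)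
   \<Longrightarrow> QQ s1 s2 x \<in> {1..N}"
  by (auto simp: up_def QQ_def)
lemma Q_out: "s1 \<le> s2 \<Longrightarrow> s2 \<le> N \<Longrightarrow> x \<notin> {1..Suc (Suc N)} \<Longrightarrow> QQ s1 s2 x \<notin> {1..N}"
  by (auto simp: up_def QQ_def)

lemma invol_permutes:
  assumes "\<And>x. p (p x) = x" "\<And>x. x \<notin> S \<Longrightarrow> p x = x"
  shows "p permutes S"
  unfolding permutes_def
proof (intro conjI allI impI)
  fix y show "\<exists>!x. p x = y"
    by (metis assms(1))
qed (use assms in auto)

lemma fpf_iff: "\<pi> \<in> fpf_involutions m \<longleftrightarrow>
   (\<forall>x. \<pi> (\<pi> x) = x) \<and> (\<forall>x. x \<notin> {1..m} \<longrightarrow> \<pi> x = x) \<and> (\<forall>x\<in>{1..m}. \<pi> x \<noteq> x)"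
proof
  assume "\<pi> \<in> fpf_involutions m"
  then show "(\<forall>x. \<pi> (\<pi> x) = x) \<and> (\<forall>x. x \<notin> {1..m} \<longrightarrow> \<pi> x = x) \<and> (\<forall>x\<in>{1..m}. \<pi> x \<noteq> x)"
    unfolding fpf_involutions_def permutes_def by (auto simp: fun_eq_iff)
next
  assume a: "(\<forall>x. \<pi> (\<pi> x) = x) \<and> (\<forall>x. x \<notin> {1..m} \<longrightarrow> \<pi> x = x) \<and> (\<forall>x\<in>{1..m}. \<pi> x \<noteq> x)"
  then have "\<pi> permutes {1..m}" by (intro invol_permutes) auto
  with a show "\<pi> \<in> fpf_involutions m"
    unfolding fpf_involutions_def by (auto simp: fun_eq_iff)
qed

lemma ins2_fpf:
  assumes sg: "\<sigma> \<in> fpf_involutions N" and s: "s1 \<le> s2" "s2 \<le> N"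
  shows "ins2 \<sigma> s1 s2 \<in> fpf_involutions (Suc (Suc N))"
proof -
  have ss: "\<And>x. \<sigma> (\<sigma> x) = x" and so: "\<And>x. x \<notin> {1..N} \<Longrightarrow> \<sigma> x = x"
    and sf: "\<And>x. x \<in> {1..N} \<Longrightarrow> \<sigma> x \<noteq> x"
    using sg unfolding fpf_iff by auto
  let ?p = "ins2 \<sigma> s1 s2"
  let ?P = "PP s1 s2" and ?Q = "QQ s1 s2"
  have e: "?p x = (if x = Suc s1 then Suc (Suc s2) else if x = Suc (Suc s2) then Suc s1
     else ?P (\<sigma> (?Q x)))" for x by (rule ins2_eq[OF s(1)])
  have inv: "?p (?p x) = x" for x
  proof (cases "x = Suc s1 \<or> x = Suc (Suc s2)")
    case True then show ?thesis using s by (auto simp: e)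
  next
    case False
    then have "?p x = ?P (\<sigma> (?Q x))" by (simp add: e)
    moreover have "?p (?P (\<sigma> (?Q x))) = ?P (\<sigma> (?Q (?P (\<sigma> (?Q x)))))"
      using P_ne1[OF s(1)] P_ne2[OF s(1)] by (simp add: e)
    ultimately show ?thesis using QP[OF s(1)] ss PQ[OF s(1)] False by simp
  qed
  have out: "?p x = x" if x: "x \<notin> {1..Suc (Suc N)}" for x
  proof -
    have "x \<noteq> Suc s1" "x \<noteq> Suc (Suc s2)" using x s by auto
    then have "?p x = ?P (\<sigma> (?Q x))" by (simp add: e)
    also have "\<sigma> (?Q x) = ?Q x" using so Q_out[OF s x] by blast
    also have "?P (?Q x) = x" using PQ[OF s(1)] \<open>x \<noteq> Suc s1\<close> \<open>x \<noteq> Suc (Suc s2)\<close> by blast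
    finally show ?thesis .
  qed
  have fp: "?p x \<noteq> x" if x: "x \<in> {1..Suc (Suc N)}" for x
  proof (cases "x = Suc s1 \<or> x = Suc (Suc s2)")
    case True then show ?thesis using s by (auto simp: e)
  next
    case False
    have qi: "?Q x \<in> {1..N}" using Q_in[OF s x] False by blast
    show ?thesis
    proof
      assume "?p x = x"
      then have "?P (\<sigma> (?Q x)) = x" using False by (simp add: e)
      then have "?Q (?P (\<sigma> (?Q x))) = ?Q x" by simp
      then have "\<sigma> (?Q x) = ?Q x" using QP[OF s(1)] by simp
      then show False using sf[OF qi] by simp
    qed
  qed
  show ?thesis unfolding fpf_iff using inv out fp by blast
qed

lemma del_fpf:
  assumes pf: "\<pi> \<in> fpf_involutions (Suc (Suc N))" and a: "a \<in> {1..Suc (Suc N)}" "a < \<pi> a"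
  defines "s1 \<equiv> a - 1" and "s2 \<equiv> \<pi> a - 2"
  defines "\<sigma> \<equiv> (\<lambda>x. QQ s1 s2 (\<pi> (PP s1 s2 x)))"
  shows "\<sigma> \<in> fpf_involutions N" "s1 \<le> s2" "s2 \<le> N" "ins2 \<sigma> s1 s2 = \<pi>"
proof -
  have pp: "\<And>x. \<pi> (\<pi> x) = x" and po: "\<And>x. x \<notin> {1..Suc (Suc N)} \<Longrightarrow> \<pi> x = x"
    and pfp: "\<And>x. x \<in> {1..Suc (Suc N)} \<Longrightarrow> \<pi> x \<noteq> x"
    using pf unfolding fpf_iff by auto
  have pa: "\<pi> a \<in> {1..Suc (Suc N)}"
  proof (rule ccontr)
    assume "\<pi> a \<notin> {1..Suc (Suc N)}"
    then have "\<pi> (\<pi> a) = \<pi> a" by (rule po)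
    then show False using pp[of a] a by simp
  qed
  have A: "a = Suc s1" and B: "\<pi> a = Suc (Suc s2)" using a pa unfolding s1_def s2_def by auto
  show s: "s1 \<le> s2" "s2 \<le> N" using a pa unfolding s1_def s2_def by auto
  let ?P = "PP s1 s2" and ?Q = "QQ s1 s2"
  have pb: "\<pi> (Suc (Suc s2)) = Suc s1" using pp[of a] A B by simp
  have pne: "\<pi> x \<noteq> Suc s1 \<and> \<pi> x \<noteq> Suc (Suc s2)" if "x \<noteq> Suc s1" "x \<noteq> Suc (Suc s2)" for x
    using that pp[of x] A B pb by metis
  have pPne: "\<pi> (?P x) \<noteq> Suc s1 \<and> \<pi> (?P x) \<noteq> Suc (Suc s2)" for x
    using pne P_ne1[OF s(1)] P_ne2[OF s(1)] by blast
  have PQp: "?P (?Q (\<pi> (?P x))) = \<pi> (?P x)" for x using PQ[OF s(1)] pPne by blast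
  have inv: "\<sigma> (\<sigma> x) = x" for x
    unfolding \<sigma>_def using PQp pp QP[OF s(1)] by simp
  have out: "\<sigma> x = x" if "x \<notin> {1..N}" for x
  proof -
    have "\<pi> (?P x) = ?P x" using po P_out[OF s that] by blast
    then show ?thesis unfolding \<sigma>_def using QP[OF s(1)] by simp
  qed
  have fp: "\<sigma> x \<noteq> x" if x: "x \<in> {1..N}" for x
  proof
    assume "\<sigma> x = x"
    then have "?P (\<sigma> x) = ?P x" by simp
    then have "\<pi> (?P x) = ?P x" using PQp unfolding \<sigma>_def by simp
    then show False using pfp P_in[OF s x] by blast
  qed
  show "\<sigma> \<in> fpf_involutions N" unfolding fpf_iff using inv out fp by blast
  show "ins2 \<sigma> s1 s2 = \<pi>"
  proof
    fix x
    show "ins2 \<sigma> s1 s2 x = \<pi> x"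
    proof (cases "x = Suc s1 \<or> x = Suc (Suc s2)")
      case True then show ?thesis using A B pb by (auto simp: ins2_eq[OF s(1)])
    next
      case False
      then have "ins2 \<sigma> s1 s2 x = ?P (?Q (\<pi> (?P (?Q x))))"
        by (simp add: ins2_eq[OF s(1)] \<sigma>_def)
      also have "?P (?Q x) = x" using PQ[OF s(1)] False by blast
      also have "?P (?Q (\<pi> x)) = \<pi> x" using PQ[OF s(1)] pne False by blast
      finally show ?thesis .
    qed
  qed
qed



declare sum.lessThan_Suc[simp del]

definition vv :: "(nat \<Rightarrow> nat) \<Rightarrow> nat \<Rightarrow> nat \<Rightarrow> int" where
  "vv w x t = of_bool (t < w x) - of_bool (t < w (Suc x))"
definition al :: "(nat \<Rightarrow> nat) \<Rightarrow> nat \<Rightarrow> int" where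
  "al w x = of_bool (w x < w (Suc x))"

lemma MM_vv: "MM w x t = vv w x t + al w x"
  by (simp add: MM_def vv_def al_def)

lemma sum_less: "(\<Sum>t<K. (of_bool (t < v) :: int)) = int (min v K)"
proof (induction K)
  case 0 then show ?case by simp
next
  case (Suc K)
  have "(\<Sum>t<Suc K. (of_bool (t < v) :: int)) = (\<Sum>t<K. (of_bool (t < v) :: int)) + of_bool (K < v)"
    by (rule sum.lessThan_Suc)
  then show ?case unfolding Suc.IH by (auto simp: min_def)
qed

lemma tele_from:
  fixes g :: "nat \<Rightarrow> int"
  shows "a \<le> K \<Longrightarrow> (\<Sum>t<K. of_bool (a \<le> t) * (g t - g (Suc t))) = g a - g K"
proof (induction K)
  case 0 then show ?case by simp
next
  case (Suc K)
  have e: "(\<Sum>t<Suc K. of_bool (a \<le> t) * (g t - g (Suc t))) = (\<Sum>t<K. of_bool (a \<le> t) * (g t - g (Suc t))) + of_bool (a \<le> K) * (g K - g (Suc K))"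
    by (rule sum.lessThan_Suc)
  show ?case
  proof (cases "a \<le> K")
    case True then show ?thesis unfolding e using Suc.IH by simp
  next
    case False
    then have a: "a = Suc K" using Suc by simp
    have "(\<Sum>t<K. of_bool (a \<le> t) * (g t - g (Suc t))) = 0"
      by (rule sum.neutral) (use a in auto)
    then show ?thesis unfolding e using a by simp
  qed
qed

context
  fixes \<sigma> :: "nat \<Rightarrow> nat" and N :: nat
  assumes sg: "\<sigma> \<in> fpf_involutions N"
begin

lemma ss: "\<sigma> (\<sigma> x) = x" using sg unfolding fpf_iff by auto
lemma so: "x \<notin> {1..N} \<Longrightarrow> \<sigma> x = x" using sg unfolding fpf_iff by auto
lemma sf: "x \<in> {1..N} \<Longrightarrow> \<sigma> x \<noteq> x" using sg unfolding fpf_iff by auto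
lemma sperm: "\<sigma> permutes {1..N}" using sg unfolding fpf_involutions_def by auto
lemma s0: "\<sigma> 0 = 0" using so by auto
lemma sK: "\<sigma> (Suc N) = Suc N" using so by auto
lemma sle: "x \<le> Suc N \<Longrightarrow> \<sigma> x \<le> Suc N" using perm_le[OF sperm] .
lemma sne: "\<sigma> x \<noteq> \<sigma> (Suc x)" using ss by (metis n_not_Suc_n)

abbreviation "AA \<equiv> (\<Sum>x<Suc N. al \<sigma> x)"

lemma A_dd: "AA + dd N \<sigma> = int (Suc N)"
proof -
  have "AA + dd N \<sigma> = (\<Sum>x<Suc N. al \<sigma> x + of_bool (\<sigma> (Suc x) < \<sigma> x))"
    by (simp add: dd_def sum.distrib)
  also have "\<dots> = (\<Sum>x<Suc N. 1)"
  proof (rule sum.cong)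
    fix x show "al \<sigma> x + of_bool (\<sigma> (Suc x) < \<sigma> x) = 1" using sne[of x] by (auto simp: al_def)
  qed simp
  finally show ?thesis by simp
qed

lemma S_sum: "(\<Sum>x<Suc N. \<Sum>t<Suc N. MM \<sigma> x t) = int (Suc N) * (AA - 1)"
proof -
  have "(\<Sum>t<Suc N. MM \<sigma> x t) = int (\<sigma> x) - int (\<sigma> (Suc x)) + int (Suc N) * al \<sigma> x"
    if "x < Suc N" for x
  proof -
    have "(\<Sum>t<Suc N. MM \<sigma> x t) = (\<Sum>t<Suc N. of_bool (t < \<sigma> x)) - (\<Sum>t<Suc N. of_bool (t < \<sigma> (Suc x))) + (\<Sum>t<Suc N. al \<sigma> x)"
      by (simp add: MM_def al_def sum.distrib sum_subtractf)
    also have "\<dots> = int (\<sigma> x) - int (\<sigma> (Suc x)) + int (Suc N) * al \<sigma> x"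
      using sle[of x] sle[of "Suc x"] that by (simp add: sum_less min_def)
    finally show ?thesis .
  qed
  then have "(\<Sum>x<Suc N. \<Sum>t<Suc N. MM \<sigma> x t) = (\<Sum>x<Suc N. int (\<sigma> x) - int (\<sigma> (Suc x)) + int (Suc N) * al \<sigma> x)"
    by (intro sum.cong) auto
  also have "\<dots> = (\<Sum>x<Suc N. int (\<sigma> x) - int (\<sigma> (Suc x))) + int (Suc N) * AA"
    by (simp add: sum.distrib sum_distrib_left)
  also have "(\<Sum>x<Suc N. int (\<sigma> x) - int (\<sigma> (Suc x))) = int (\<sigma> 0) - int (\<sigma> (Suc N))"
    by (rule sum_lessThan_telescope')
  finally show ?thesis using s0 sK by (simp add: algebra_simps)
qed

lemma D_sum: "(\<Sum>x<Suc N. MM \<sigma> x x) = AA - 1"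
proof -
  have e: "(of_bool (x < \<sigma> (Suc x)) :: int) = of_bool (Suc x < \<sigma> (Suc x)) + of_bool (x = N)"
    if "x < Suc N" for x
  proof (cases "x = N")
    case True then show ?thesis using sK by simp
  next
    case False
    then have "Suc x \<in> {1..N}" using that by auto
    then have "\<sigma> (Suc x) \<noteq> Suc x" by (rule sf)
    then show ?thesis using False by auto
  qed
  have "(\<Sum>x<Suc N. MM \<sigma> x x) = (\<Sum>x<Suc N. (of_bool (x < \<sigma> x) - of_bool (Suc x < \<sigma> (Suc x))) - of_bool (x = N) + al \<sigma> x)"
    by (rule sum.cong) (use e in \<open>auto simp: MM_def al_def\<close>)
  also have "\<dots> = (\<Sum>x<Suc N. (of_bool (x < \<sigma> x) - of_bool (Suc x < \<sigma> (Suc x)) :: int)) - (\<Sum>x<Suc N. of_bool (x = N)) + AA"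
    by (simp add: sum.distrib sum_subtractf)
  also have "(\<Sum>x<Suc N. (of_bool (x < \<sigma> x) - of_bool (Suc x < \<sigma> (Suc x)) :: int)) = of_bool (0 < \<sigma> 0) - of_bool (Suc N < \<sigma> (Suc N))"
    by (rule sum_lessThan_telescope')
  also have "(\<Sum>x<Suc N. (of_bool (x = N) :: int)) = 1"
    by (simp add: sum.delta)
  finally show ?thesis using s0 sK by simp
qed

lemma vsum: "z < Suc N \<Longrightarrow> (\<Sum>y<Suc N. vv \<sigma> y z) = -1"
proof -
  assume z: "z < Suc N"
  have "(\<Sum>y<Suc N. vv \<sigma> y z) = of_bool (z < \<sigma> 0) - of_bool (z < \<sigma> (Suc N))"
    unfolding vv_def by (rule sum_lessThan_telescope')
  then show ?thesis using s0 sK z by simp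
qed

lemma vv_alt: "vv \<sigma> x t = of_bool (\<sigma> (Suc x) \<le> t) - of_bool (\<sigma> x \<le> t)"
  by (auto simp: vv_def not_less[symmetric])

lemma vvsum: "x < Suc N \<Longrightarrow> (\<Sum>t<Suc N. vv \<sigma> x t * vv \<sigma> t x) = 1"
proof -
  assume x: "x < Suc N"
  let ?g = "\<lambda>t. (of_bool (x < \<sigma> t) :: int)"
  have "(\<Sum>t<Suc N. vv \<sigma> x t * vv \<sigma> t x) =
     (\<Sum>t<Suc N. of_bool (\<sigma> (Suc x) \<le> t) * (?g t - ?g (Suc t))) - (\<Sum>t<Suc N. of_bool (\<sigma> x \<le> t) * (?g t - ?g (Suc t)))"
    unfolding sum_subtractf[symmetric]
    by (rule sum.cong) (auto simp: vv_alt vv_def algebra_simps)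
  also have "\<dots> = (?g (\<sigma> (Suc x)) - ?g (Suc N)) - (?g (\<sigma> x) - ?g (Suc N))"
    using tele_from[of "\<sigma> (Suc x)" "Suc N" ?g] tele_from[of "\<sigma> x" "Suc N" ?g] sle[of x] sle[of "Suc x"] x
    by simp
  finally show ?thesis using ss by simp
qed

lemma X_sum: "(\<Sum>x<Suc N. \<Sum>t<Suc N. MM \<sigma> x t * MM \<sigma> t x) = int (Suc N) - 2 * AA + AA * AA"
proof -
  have "(\<Sum>x<Suc N. \<Sum>t<Suc N. MM \<sigma> x t * MM \<sigma> t x) =
     (\<Sum>x<Suc N. \<Sum>t<Suc N. vv \<sigma> x t * vv \<sigma> t x) + (\<Sum>x<Suc N. al \<sigma> x * (\<Sum>t<Suc N. vv \<sigma> t x))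
     + (\<Sum>x<Suc N. \<Sum>t<Suc N. al \<sigma> t * vv \<sigma> x t) + (\<Sum>x<Suc N. al \<sigma> x * (\<Sum>t<Suc N. al \<sigma> t))"
    by (simp add: MM_vv algebra_simps sum.distrib sum_distrib_left)
  also have "(\<Sum>x<Suc N. \<Sum>t<Suc N. vv \<sigma> x t * vv \<sigma> t x) = int (Suc N)"
    using vvsum by simp
  also have "(\<Sum>x<Suc N. al \<sigma> x * (\<Sum>t<Suc N. vv \<sigma> t x)) = - AA"
    using vsum by (simp add: sum_negf)
  also have "(\<Sum>x<Suc N. \<Sum>t<Suc N. al \<sigma> t * vv \<sigma> x t) = (\<Sum>t<Suc N. al \<sigma> t * (\<Sum>x<Suc N. vv \<sigma> x t))"
    unfolding sum_distrib_left by (rule sum.swap)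
  also have "\<dots> = - AA"
    using vsum by (simp add: sum_negf)
  also have "(\<Sum>x<Suc N. al \<sigma> x * (\<Sum>t<Suc N. al \<sigma> t)) = AA * AA"
    by (simp add: sum_distrib_right)
  finally show ?thesis by simp
qed

end



definition cc :: "(nat \<Rightarrow> nat) \<Rightarrow> nat \<Rightarrow> nat \<Rightarrow> int" where
  "cc w s2 s1 = MM w s2 s1 + (if s1 = s2 then 1 else MM w s1 s2)"

definition Tri :: "nat \<Rightarrow> (nat \<times> nat) set" where
  "Tri N = Sigma {..<Suc N} (\<lambda>s2. {..<Suc s2})"

lemma finite_Tri: "finite (Tri N)" by (simp add: Tri_def)

lemma MM01: "MM w x t = 0 \<or> MM w x t = 1"
  by (auto simp: MM_def)

lemma lv_gt: "s1 < s2 \<Longrightarrow> (Suc s2 < lv s1 a) = (s2 < a)"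
  by (auto simp: lv_def)

lemma MM_w': assumes "s1 \<le> s2"
  shows "MM (ins1 w s2 s1) s1 (Suc s2) = (if s1 = s2 then 1 else MM w s1 s2)"
proof (cases "s1 = s2")
  case True then show ?thesis by (auto simp: MM_def ins1_def up_def lv_def)
next
  case False
  then have lt: "s1 < s2" using assms by simp
  have e1: "ins1 w s2 s1 s1 = lv s1 (w s1)" using lt by (simp add: ins1_def up_def)
  have e2: "ins1 w s2 s1 (Suc s1) = lv s1 (w (Suc s1))" using lt by (simp add: ins1_def up_def)
  show ?thesis using lt False unfolding MM_def e1 e2 by (simp add: lv_gt lv_less)
qed

lemma des_ins2:
  assumes sg: "\<sigma> \<in> fpf_involutions N" and s: "s1 \<le> s2" "s2 \<le> N"
  shows "int (des (Suc (Suc N)) (ins2 \<sigma> s1 s2)) = int (des N \<sigma>) + cc \<sigma> s2 s1"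
proof -
  have sp: "\<sigma> permutes {1..N}" using sg unfolding fpf_involutions_def by auto
  have w': "ins1 \<sigma> s2 s1 permutes {1..Suc N}" by (rule ins1_perm[OF sp]) (use s in auto)
  have w'': "ins2 \<sigma> s1 s2 permutes {1..Suc (Suc N)}" unfolding ins2_def by (rule ins1_perm[OF w']) (use s in auto)
  have "int (des (Suc (Suc N)) (ins2 \<sigma> s1 s2)) = dd (Suc (Suc N)) (ins2 \<sigma> s1 s2)" by (rule des_dd[OF w''])
  also have "\<dots> = dd (Suc N) (ins1 \<sigma> s2 s1) + MM (ins1 \<sigma> s2 s1) s1 (Suc s2)"
    unfolding ins2_def by (rule dd_ins1[OF w']) (use s in auto)
  also have "dd (Suc N) (ins1 \<sigma> s2 s1) = dd N \<sigma> + MM \<sigma> s2 s1"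
    by (rule dd_ins1[OF sp]) (use s in auto)
  also have "dd N \<sigma> = int (des N \<sigma>)" by (rule des_dd[OF sp, symmetric])
  finally show ?thesis using MM_w'[OF s(1)] by (simp add: cc_def)
qed

lemma tri_lemma:
  fixes g :: "nat \<Rightarrow> nat \<Rightarrow> int"
  shows "(\<Sum>s2<K. \<Sum>s1<s2. g s2 s1 + g s1 s2) = (\<Sum>x<K. \<Sum>y<K. g x y) - (\<Sum>x<K. g x x)"
  by (induction K) (simp_all add: sum.lessThan_Suc sum.distrib algebra_simps)

lemma Tri_sum: "(\<Sum>p\<in>Tri N. f p) = (\<Sum>s2<Suc N. \<Sum>s1<Suc s2. f (s2, s1))"
  unfolding Tri_def by (simp add: sum.Sigma)

context
  fixes \<sigma> :: "nat \<Rightarrow> nat" and N :: nat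
  assumes sg: "\<sigma> \<in> fpf_involutions N"
begin

abbreviation "M \<equiv> MM \<sigma>"

lemma sum_c: "(\<Sum>p\<in>Tri N. cc \<sigma> (fst p) (snd p)) = int (Suc N) * (AA \<sigma> N - 1) + int (Suc N)"
proof -
  have "(\<Sum>p\<in>Tri N. cc \<sigma> (fst p) (snd p)) = (\<Sum>s2<Suc N. (\<Sum>s1<s2. M s2 s1 + M s1 s2) + (M s2 s2 + 1))"
    unfolding Tri_sum by (rule sum.cong) (auto simp: sum.lessThan_Suc cc_def intro!: sum.cong)
  also have "\<dots> = (\<Sum>s2<Suc N. \<Sum>s1<s2. M s2 s1 + M s1 s2) + (\<Sum>x<Suc N. M x x) + int (Suc N)"
    by (simp add: sum.distrib)
  also have "\<dots> = (\<Sum>x<Suc N. \<Sum>y<Suc N. M x y) + int (Suc N)"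
    by (simp add: tri_lemma)
  finally show ?thesis using S_sum[OF sg] by simp
qed

lemma sum_c2: "(\<Sum>p\<in>Tri N. (cc \<sigma> (fst p) (snd p))^2) =
   int (Suc N) * (AA \<sigma> N - 1) + (int (Suc N) - 2 * AA \<sigma> N + AA \<sigma> N * AA \<sigma> N) + (AA \<sigma> N - 1) + int (Suc N)"
proof -
  define g where "g x y = M x y + M x y * M y x" for x y
  have sq: "M x y * M x y = M x y" for x y using MM01[of \<sigma> x y] by auto
  have "(\<Sum>p\<in>Tri N. (cc \<sigma> (fst p) (snd p))^2) = (\<Sum>s2<Suc N. (\<Sum>s1<s2. g s2 s1 + g s1 s2) + (3 * M s2 s2 + 1))"
    unfolding Tri_sum
  proof (rule sum.cong)
    fix s2 assume "s2 \<in> {..<Suc N}"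
    have "(\<Sum>s1<Suc s2. (cc \<sigma> (fst (s2, s1)) (snd (s2, s1)))^2) = (\<Sum>s1<s2. (cc \<sigma> s2 s1)^2) + (cc \<sigma> s2 s2)^2"
      by (simp add: sum.lessThan_Suc)
    also have "(\<Sum>s1<s2. (cc \<sigma> s2 s1)^2) = (\<Sum>s1<s2. g s2 s1 + g s1 s2)"
      by (rule sum.cong) (auto simp: cc_def g_def power2_eq_square algebra_simps sq)
    also have "(cc \<sigma> s2 s2)^2 = 3 * M s2 s2 + 1"
      by (simp add: cc_def power2_eq_square algebra_simps sq)
    finally show "(\<Sum>s1<Suc s2. (cc \<sigma> (fst (s2, s1)) (snd (s2, s1)))^2) = (\<Sum>s1<s2. g s2 s1 + g s1 s2) + (3 * M s2 s2 + 1)" .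
  qed simp
  also have "\<dots> = (\<Sum>s2<Suc N. \<Sum>s1<s2. g s2 s1 + g s1 s2) + (\<Sum>s2<Suc N. 3 * M s2 s2 + 1)"
    by (rule sum.distrib)
  also have "(\<Sum>s2<Suc N. \<Sum>s1<s2. g s2 s1 + g s1 s2) = (\<Sum>x<Suc N. \<Sum>y<Suc N. g x y) - (\<Sum>x<Suc N. g x x)"
    by (rule tri_lemma)
  also have "(\<Sum>s2<Suc N. 3 * M s2 s2 + 1) = 3 * (\<Sum>x<Suc N. M x x) + int (Suc N)"
    by (simp add: sum.distrib sum_distrib_left)
  also have "(\<Sum>x<Suc N. \<Sum>y<Suc N. g x y) = (\<Sum>x<Suc N. \<Sum>y<Suc N. M x y) + (\<Sum>x<Suc N. \<Sum>y<Suc N. M x y * M y x)"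
    by (simp add: g_def sum.distrib)
  also have "(\<Sum>x<Suc N. g x x) = 2 * (\<Sum>x<Suc N. M x x)"
    by (simp add: g_def sq sum_distrib_left)
  finally show ?thesis using S_sum[OF sg] X_sum[OF sg] D_sum[OF sg] by simp
qed

lemma card_Tri: "2 * int (card (Tri N)) = int (Suc N) * int (Suc (Suc N))"
proof -
  have "int (card (Tri N)) = (\<Sum>p\<in>Tri N. 1)" by simp
  also have "\<dots> = (\<Sum>s2<Suc N. int (Suc s2))" unfolding Tri_sum by simp
  finally have e: "int (card (Tri N)) = (\<Sum>s2<Suc N. int (Suc s2))" .
  have "2 * (\<Sum>s2<K. int (Suc s2)) = int K * int (Suc K)" for K
    by (induction K) (simp_all add: sum.lessThan_Suc algebra_simps)
  then show ?thesis unfolding e .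
qed

lemma c012: "cc \<sigma> s2 s1 = 0 \<or> cc \<sigma> s2 s1 = 1 \<or> cc \<sigma> s2 s1 = 2"
  using MM01[of \<sigma> s2 s1] MM01[of \<sigma> s1 s2] by (auto simp: cc_def)

lemma count_pointwise:
  fixes k :: nat
  defines "j \<equiv> des N \<sigma>"
  shows "2 * int (card {p \<in> Tri N. int j + cc \<sigma> (fst p) (snd p) = int k}) =
     of_bool (j = k) * (int k * (int k + 1) + int N)
   + of_bool (j + 1 = k) * (2 * ((int k - 1) * (int N - int k + 1) + 1))
   + of_bool (j + 2 = k) * ((int N - int k + 2) * (int N - int k + 3) + int N)"
proof -
  let ?c = "\<lambda>p. cc \<sigma> (fst p) (snd p)"
  have A: "AA \<sigma> N = int (Suc N) - int j"
    using A_dd[OF sg] des_dd[OF sperm[OF sg]] unfolding j_def by simp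
  have SC: "(\<Sum>p\<in>Tri N. ?c p) = int (Suc N) * (int N - int j) + int (Suc N)"
    using sum_c A by simp
  have SC2: "(\<Sum>p\<in>Tri N. (?c p)^2) = int (Suc N) * (int N - int j) + (int (Suc N) - 2 * (int (Suc N) - int j) + (int (Suc N) - int j) * (int (Suc N) - int j)) + (int N - int j) + int (Suc N)"
    using sum_c2 A by simp
  have T: "2 * (\<Sum>p\<in>Tri N. (1::int)) = int (Suc N) * int (Suc (Suc N))" using card_Tri by simp
  have cnt: "int (card {p \<in> Tri N. int j + ?c p = int k}) = (\<Sum>p\<in>Tri N. of_bool (?c p = int k - int j))"
    using card_of_bool[OF finite_Tri[of N], of "\<lambda>p. int j + ?c p = int k"] by (simp add: algebra_simps)
  have c3: "?c p = 0 \<or> ?c p = 1 \<or> ?c p = 2" for p using c012 .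
  consider "int k - int j = 0" | "int k - int j = 1" | "int k - int j = 2" | "int k - int j \<notin> {0,1,2}" by blast
  then show ?thesis
  proof cases
    case 1
    have "2 * (\<Sum>p\<in>Tri N. (of_bool (?c p = int k - int j) :: int)) = (\<Sum>p\<in>Tri N. (?c p)^2 - 3 * ?c p + 2)"
      unfolding sum_distrib_left
      apply (rule sum.cong[OF refl])
      subgoal for p using c3[of p] 1 by (auto simp: power2_eq_square)
      done
    also have "\<dots> = (\<Sum>p\<in>Tri N. (?c p)^2) - 3 * (\<Sum>p\<in>Tri N. ?c p) + 2 * (\<Sum>p\<in>Tri N. (1::int))"
      by (simp add: sum.distrib sum_subtractf sum_distrib_left)
    finally show ?thesis unfolding cnt SC SC2 T using 1 by (simp add: algebra_simps)
  next
    case 2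
    have "2 * (\<Sum>p\<in>Tri N. (of_bool (?c p = int k - int j) :: int)) = (\<Sum>p\<in>Tri N. 4 * ?c p - 2 * (?c p)^2)"
      unfolding sum_distrib_left
      apply (rule sum.cong[OF refl])
      subgoal for p using c3[of p] 2 by (auto simp: power2_eq_square)
      done
    also have "\<dots> = 4 * (\<Sum>p\<in>Tri N. ?c p) - 2 * (\<Sum>p\<in>Tri N. (?c p)^2)"
      by (simp add: sum.distrib sum_subtractf sum_distrib_left)
    finally show ?thesis unfolding cnt SC SC2 using 2 by (simp add: algebra_simps)
  next
    case 3
    have "2 * (\<Sum>p\<in>Tri N. (of_bool (?c p = int k - int j) :: int)) = (\<Sum>p\<in>Tri N. (?c p)^2 - ?c p)"
      unfolding sum_distrib_left
      apply (rule sum.cong[OF refl])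
      subgoal for p using c3[of p] 3 by (auto simp: power2_eq_square)
      done
    also have "\<dots> = (\<Sum>p\<in>Tri N. (?c p)^2) - (\<Sum>p\<in>Tri N. ?c p)"
      by (simp add: sum_subtractf)
    finally show ?thesis unfolding cnt SC SC2 using 3 by (simp add: algebra_simps)
  next
    case 4
    have "(\<Sum>p\<in>Tri N. (of_bool (?c p = int k - int j) :: int)) = 0"
    proof (rule sum.neutral, intro ballI)
      fix p show "(of_bool (?c p = int k - int j) :: int) = 0" using c3[of p] 4 by auto
    qed
    then show ?thesis unfolding cnt using 4 by auto
  qed
qed

end



lemma finite_fpf: "finite (fpf_involutions m)"
proof -
  have "fpf_involutions m \<subseteq> {p. p permutes {1..m}}" unfolding fpf_involutions_def by auto
  moreover have "finite {p. p permutes {1..m::nat}}" by (rule finite_permutations) simp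
  ultimately show ?thesis by (rule finite_subset)
qed

lemma half_count:
  assumes pf: "\<pi> \<in> fpf_involutions (2 * n)"
  shows "card {a \<in> {1..2*n}. a < \<pi> a} = n"
proof -
  have pp: "\<And>x. \<pi> (\<pi> x) = x" and po: "\<And>x. x \<notin> {1..2*n} \<Longrightarrow> \<pi> x = x"
    and pfp: "\<And>x. x \<in> {1..2*n} \<Longrightarrow> \<pi> x \<noteq> x"
    using pf unfolding fpf_iff by auto
  have pin: "\<pi> x \<in> {1..2*n}" if "x \<in> {1..2*n}" for x
  proof (rule ccontr)
    assume "\<pi> x \<notin> {1..2*n}"
    then have "\<pi> (\<pi> x) = \<pi> x" by (rule po)
    then show False using pp[of x] pfp[OF that] by simp
  qed
  define A where "A = {a \<in> {1..2*n}. a < \<pi> a}"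
  define B where "B = {a \<in> {1..2*n}. \<pi> a < a}"
  have inj: "inj_on \<pi> A" by (metis pp inj_onI)
  have img: "\<pi> ` A = B"
  proof
    show "\<pi> ` A \<subseteq> B" unfolding A_def B_def using pin pp by auto
  next
    show "B \<subseteq> \<pi> ` A"
    proof
      fix b assume b: "b \<in> B"
      then have "\<pi> b \<in> A" unfolding A_def B_def using pin pp by auto
      moreover have "b = \<pi> (\<pi> b)" using pp by simp
      ultimately show "b \<in> \<pi> ` A" by blast
    qed
  qed
  have cB: "card B = card A" using card_image[OF inj] img by simp
  have un: "A \<union> B = {1..2*n}"
  proof
    show "A \<union> B \<subseteq> {1..2*n}" by (auto simp: A_def B_def)
  next
    show "{1..2*n} \<subseteq> A \<union> B"
    proof
      fix x assume x: "x \<in> {1..2*n}"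
      then have "\<pi> x \<noteq> x" by (rule pfp)
      then have "x < \<pi> x \<or> \<pi> x < x" by linarith
      with x show "x \<in> A \<union> B" by (auto simp: A_def B_def)
    qed
  qed
  have di: "A \<inter> B = {}" unfolding A_def B_def by auto
  have "card A + card B = 2 * n"
    using card_Un_disjoint[of A B] un di by (simp add: A_def B_def)
  then show ?thesis using cB unfolding A_def by simp
qed

lemma ins2_recover:
  assumes "s1 \<le> s2"
  shows "QQ s1 s2 (ins2 \<sigma> s1 s2 (PP s1 s2 x)) = \<sigma> x"
  using assms P_ne1[OF assms] P_ne2[OF assms] QP[OF assms] by (simp add: ins2_eq[OF assms])

lemma main_count:
  fixes N kn :: nat
  defines "m \<equiv> Suc (Suc N)"
  defines "F \<equiv> {\<pi> \<in> fpf_involutions m. des m \<pi> = kn}"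
  defines "G \<equiv> (\<lambda>\<sigma>. {p \<in> Tri N. des m (ins2 \<sigma> (snd p) (fst p)) = kn})"
  shows "card (Sigma F (\<lambda>\<pi>. {a \<in> {1..m}. a < \<pi> a})) = (\<Sum>\<sigma>\<in>fpf_involutions N. card (G \<sigma>))"
proof -
  define h where "h = (\<lambda>(\<sigma>::nat\<Rightarrow>nat, p::nat\<times>nat). (ins2 \<sigma> (snd p) (fst p), Suc (snd p)))"
  have bij: "bij_betw h (Sigma (fpf_involutions N) G) (Sigma F (\<lambda>\<pi>. {a \<in> {1..m}. a < \<pi> a}))"
    unfolding bij_betw_def
  proof (intro conjI)
    show "inj_on h (Sigma (fpf_involutions N) G)"
    proof (rule inj_onI)
      fix u v assume u: "u \<in> Sigma (fpf_involutions N) G" and v: "v \<in> Sigma (fpf_involutions N) G" and e: "h u = h v"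
      obtain \<sigma> s2 s1 where u': "u = (\<sigma>, (s2, s1))" by (metis prod.exhaust)
      obtain \<sigma>' s2' s1' where v': "v = (\<sigma>', (s2', s1'))" by (metis prod.exhaust)
      have le: "s1 \<le> s2" "s1' \<le> s2'" using u v unfolding u' v' G_def Tri_def by auto
      have e1: "ins2 \<sigma> s1 s2 = ins2 \<sigma>' s1' s2'" and e2: "s1 = s1'" using e unfolding h_def u' v' by auto
      have "ins2 \<sigma> s1 s2 (Suc s1) = Suc (Suc s2)" by (simp add: ins2_eq[OF le(1)])
      moreover have "ins2 \<sigma>' s1' s2' (Suc s1) = Suc (Suc s2')" using e2 by (simp add: ins2_eq[OF le(2)])
      ultimately have e3: "s2 = s2'" using e1 by simp
      have "\<sigma> x = \<sigma>' x" for x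
        using ins2_recover[OF le(1), of \<sigma> x] ins2_recover[OF le(2), of \<sigma>' x] e1 e2 e3 by simp
      then show "u = v" unfolding u' v' using e2 e3 by auto
    qed
  next
    show "h ` Sigma (fpf_involutions N) G = Sigma F (\<lambda>\<pi>. {a \<in> {1..m}. a < \<pi> a})"
    proof
      show "h ` Sigma (fpf_involutions N) G \<subseteq> Sigma F (\<lambda>\<pi>. {a \<in> {1..m}. a < \<pi> a})"
      proof
        fix y assume "y \<in> h ` Sigma (fpf_involutions N) G"
        then obtain \<sigma> s2 s1 where sg: "\<sigma> \<in> fpf_involutions N" and p: "(s2, s1) \<in> G \<sigma>"
          and y: "y = h (\<sigma>, (s2, s1))" by auto
        have le: "s1 \<le> s2" "s2 \<le> N" using p unfolding G_def Tri_def by auto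
        have "ins2 \<sigma> s1 s2 \<in> fpf_involutions m" unfolding m_def by (rule ins2_fpf[OF sg le])
        moreover have "des m (ins2 \<sigma> s1 s2) = kn" using p unfolding G_def by simp
        moreover have "ins2 \<sigma> s1 s2 (Suc s1) = Suc (Suc s2)" by (simp add: ins2_eq[OF le(1)])
        ultimately show "y \<in> Sigma F (\<lambda>\<pi>. {a \<in> {1..m}. a < \<pi> a})"
          unfolding y h_def F_def m_def using le by auto
      qed
    next
      show "Sigma F (\<lambda>\<pi>. {a \<in> {1..m}. a < \<pi> a}) \<subseteq> h ` Sigma (fpf_involutions N) G"
      proof
        fix y assume y: "y \<in> Sigma F (\<lambda>\<pi>. {a \<in> {1..m}. a < \<pi> a})"
        obtain \<pi> a where y': "y = (\<pi>, a)" by (metis prod.exhaust)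
        have pf: "\<pi> \<in> fpf_involutions (Suc (Suc N))" and dk: "des m \<pi> = kn"
          and a: "a \<in> {1..Suc (Suc N)}" "a < \<pi> a"
          using y unfolding y' F_def m_def by auto
        define s1 where "s1 = a - 1"
        define s2 where "s2 = \<pi> a - 2"
        define \<sigma> where "\<sigma> = (\<lambda>x. QQ s1 s2 (\<pi> (PP s1 s2 x)))"
        note D = del_fpf[OF pf a, folded s1_def s2_def, folded \<sigma>_def]
        have "(s2, s1) \<in> G \<sigma>" unfolding G_def Tri_def using D dk by auto
        moreover have "h (\<sigma>, (s2, s1)) = y" unfolding h_def y' using D a s1_def by auto
        ultimately show "y \<in> h ` Sigma (fpf_involutions N) G" using D(1) by force
      qed
    qed
  qed
  have "card (Sigma F (\<lambda>\<pi>. {a \<in> {1..m}. a < \<pi> a})) = card (Sigma (fpf_involutions N) G)"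
    using bij_betw_same_card[OF bij] by simp
  also have "\<dots> = (\<Sum>\<sigma>\<in>fpf_involutions N. card (G \<sigma>))"
    by (rule card_SigmaI) (auto simp: finite_fpf G_def finite_Tri)
  finally show ?thesis .
qed



lemma J_alt: "J m j = int (card {\<pi> \<in> fpf_involutions m. int (des m \<pi>) = j})"
  unfolding J_def by auto

theorem theorem2p1:
  fixes n :: nat and k :: int
  assumes "n \<ge> 2" and "k \<ge> 0"
  shows "2 * int n * J (2*n) k =
           (k*(k+1) + 2*int n - 2) * J (2*n-2) k
         + 2 * ((k-1)*(2*int n - k - 1) + 1) * J (2*n-2) (k-1)
         + ((2*int n - k)*(2*int n - k + 1) + 2*int n - 2) * J (2*n-2) (k-2)"
proof -
  define N where "N = 2 * n - 2"
  define kn where "kn = nat k"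
  have kk: "k = int kn" using assms(2) unfolding kn_def by simp
  have m: "2 * n = Suc (Suc N)" using assms(1) unfolding N_def by simp
  have iN: "int N = 2 * int n - 2" using assms(1) unfolding N_def by simp
  define F where "F = {\<pi> \<in> fpf_involutions (Suc (Suc N)). des (Suc (Suc N)) \<pi> = kn}"
  define G where "G = (\<lambda>\<sigma>. {p \<in> Tri N. des (Suc (Suc N)) (ins2 \<sigma> (snd p) (fst p)) = kn})"
  have J1: "J (2*n) k = int (card F)"
    unfolding J_alt F_def m kk by simp
  have "card (Sigma F (\<lambda>\<pi>. {a \<in> {1..Suc (Suc N)}. a < \<pi> a})) = (\<Sum>\<pi>\<in>F. card {a \<in> {1..Suc (Suc N)}. a < \<pi> a})"
    by (rule card_SigmaI) (auto simp: F_def intro: finite_subset[OF _ finite_fpf])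
  also have "\<dots> = (\<Sum>\<pi>\<in>F. n)"
  proof (rule sum.cong[OF refl])
    fix \<pi> assume "\<pi> \<in> F"
    then have "\<pi> \<in> fpf_involutions (2 * n)" unfolding F_def m by simp
    from half_count[OF this] show "card {a \<in> {1..Suc (Suc N)}. a < \<pi> a} = n" unfolding m .
  qed
  finally have c1: "card (Sigma F (\<lambda>\<pi>. {a \<in> {1..Suc (Suc N)}. a < \<pi> a})) = n * card F" by simp
  have c2: "n * card F = (\<Sum>\<sigma>\<in>fpf_involutions N. card (G \<sigma>))"
    using main_count[of N kn] c1 unfolding F_def G_def by simp
  define E1 where "E1 = int kn * (int kn + 1) + int N"
  define E2 where "E2 = 2 * ((int kn - 1) * (int N - int kn + 1) + 1)"
  define E3 where "E3 = (int N - int kn + 2) * (int N - int kn + 3) + int N"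
  have pw: "2 * int (card (G \<sigma>)) = of_bool (des N \<sigma> = kn) * E1 + of_bool (des N \<sigma> + 1 = kn) * E2 + of_bool (des N \<sigma> + 2 = kn) * E3"
    if sg: "\<sigma> \<in> fpf_involutions N" for \<sigma>
  proof -
    have "G \<sigma> = {p \<in> Tri N. int (des N \<sigma>) + cc \<sigma> (fst p) (snd p) = int kn}"
      unfolding G_def
    proof (rule Collect_cong, rule conj_cong[OF refl])
      fix p assume "p \<in> Tri N"
      then have le: "snd p \<le> fst p" "fst p \<le> N" unfolding Tri_def by auto
      show "(des (Suc (Suc N)) (ins2 \<sigma> (snd p) (fst p)) = kn) = (int (des N \<sigma>) + cc \<sigma> (fst p) (snd p) = int kn)"
        using des_ins2[OF sg le] by linarith
    qed
    then show ?thesis using count_pointwise[OF sg, of kn] unfolding E1_def E2_def E3_def by simp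
  qed
  have "2 * int n * J (2*n) k = 2 * int (n * card F)" using J1 by simp
  also have "\<dots> = 2 * (\<Sum>\<sigma>\<in>fpf_involutions N. int (card (G \<sigma>)))" unfolding c2 of_nat_sum ..
  also have "\<dots> = (\<Sum>\<sigma>\<in>fpf_involutions N. 2 * int (card (G \<sigma>)))" by (rule sum_distrib_left)
  also have "\<dots> = (\<Sum>\<sigma>\<in>fpf_involutions N. of_bool (des N \<sigma> = kn) * E1 + of_bool (des N \<sigma> + 1 = kn) * E2 + of_bool (des N \<sigma> + 2 = kn) * E3)"
    by (rule sum.cong) (use pw in auto)
  also have "\<dots> = (\<Sum>\<sigma>\<in>fpf_involutions N. (of_bool (int (des N \<sigma>) = k) :: int)) * E1
      + (\<Sum>\<sigma>\<in>fpf_involutions N. (of_bool (int (des N \<sigma>) = k - 1) :: int)) * E2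
      + (\<Sum>\<sigma>\<in>fpf_involutions N. (of_bool (int (des N \<sigma>) = k - 2) :: int)) * E3"
    unfolding sum.distrib sum_distrib_right kk by (intro arg_cong2[where f="(+)"] sum.cong refl) auto
  also have "(\<Sum>\<sigma>\<in>fpf_involutions N. (of_bool (int (des N \<sigma>) = k) :: int)) = J N k"
    unfolding J_alt by (rule card_of_bool[OF finite_fpf, symmetric])
  also have "(\<Sum>\<sigma>\<in>fpf_involutions N. (of_bool (int (des N \<sigma>) = k - 1) :: int)) = J N (k - 1)"
    unfolding J_alt by (rule card_of_bool[OF finite_fpf, symmetric])
  also have "(\<Sum>\<sigma>\<in>fpf_involutions N. (of_bool (int (des N \<sigma>) = k - 2) :: int)) = J N (k - 2)"
    unfolding J_alt by (rule card_of_bool[OF finite_fpf, symmetric])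
  finally show ?thesis unfolding E1_def E2_def E3_def N_def[symmetric] iN kk[symmetric]
    by (simp add: algebra_simps)
qed

end
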